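(* Let $k\ge0$ be an unknown Lipschitz constant. The ECP algorithm tuned with any $\varepsilon_1>0$, any growth coefficient $\tau_{n,d}>1$ and any $C>1$ is no-regret over $\mathrm{Lip}(k)$: for every $f\in\mathrm{Lip}(k)$, $\mathcal{R}_{\mathrm{ECP},f}(n)\to0$ in probability as $n\to\infty$.
   Context: $\mathcal{X}\subset\mathbb{R}^d$ is convex, compact with non-empty interior; $\mathrm{Lip}(k)=\{g:\mathcal{X}\to\mathbb{R}:\ |g(x)-g(x')|\le k\|x-x'\|_2\}$. The regret after $n$ evaluations $x_1,\dots,x_n$ is $\mathcal{R}_{\mathrm{ECP},f}(n)=\max_{x\in\mathcal{X}}f(x)-\max_{i=1,\dots,n}f(x_i)$. For evaluated points $x_1,\dots,x_t$ and $\varepsilon>0$, $\mathcal{A}_{\varepsilon,t}=\{x\in\mathcal{X}: \min_{i\le t}(f(x_i)+\varepsilon\|x-x_i\|_2)\ge\max_{j\le t}f(x_j)\}$. ECP algorithm. Inputs: budget $n\in\mathbb{N}^\star$, $\varepsilon_1>0$, a coefficient $\tau_{n,d}>1$ which is a non-decreasing function of $n$ and $d$, a constant $C>1$. Draw $x_1\sim\mathcal{U}(\mathcal{X})$ and evaluate $f(x_1)$; set $t=1$, $h_1=1$, $h_2=0$. While $t<n$: draw a fresh candidate $x_{t+1}\sim\mathcal{U}(\mathcal{X})$ and set $h_{t+1}\leftarrow h_{t+1}+1$; if $h_{t+1}-h_t>C$ (growth condition), set $\varepsilon_t\leftarrow\tau_{n,d}\varepsilon_t$ and $h_{t+1}\leftarrow0$;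 if $x_{t+1}\in\mathcal{A}_{\varepsilon_t,t}$ (acceptance condition), evaluate $f(x_{t+1})$, set $t\leftarrow t+1$, then $h_t\leftarrow h_{t+1}$, $\varepsilon_{t+1}\leftarrow\tau_{n,d}\varepsilon_t$, $h_{t+1}\leftarrow0$. Output $x_{\hat i}$ with $\hat i\in\arg\max_{i\le n}f(x_i)$. *)

theory Defs
  imports "HOL-Probability.Probability"
begin

definition lip_on :: "'a::euclidean_space set \<Rightarrow> real \<Rightarrow> ('a \<Rightarrow> real) \<Rightarrow> bool" where
  "lip_on X k g \<longleftrightarrow> (\<forall>x\<in>X. \<forall>x'\<in>X. \<bar>g x - g x'\<bar> \<le> k * norm (x - x'))"

definition acc_set :: "'a::euclidean_space set \<Rightarrow> ('a \<Rightarrow> real) \<Rightarrow> real \<Rightarrow> 'a list \<Rightarrow> 'a set" where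
  "acc_set X f e xs =
     {x \<in> X. Min ((\<lambda>xi. f xi + e * norm (x - xi)) ` set xs) \<ge> Max (f ` set xs)}"

text \<open>State of ECP: t, current eps_t, h_t, h_{t+1}, evaluated points x_1..x_t.\<close>
record 'a ecp_state =
  cnt :: nat
  eps :: real
  hprev :: nat
  hcur :: nat
  pts :: "'a list"

definition ecp_step :: "'a::euclidean_space set \<Rightarrow> ('a \<Rightarrow> real) \<Rightarrow> nat \<Rightarrow> real \<Rightarrow> real
    \<Rightarrow> 'a \<Rightarrow> 'a ecp_state \<Rightarrow> 'a ecp_state" where
  "ecp_step X f n tau C z s =
    (if n \<le> cnt s then s else
     (let h1 = hcur s + 1;
          grow = (real h1 - real (hprev s) > C);
          e = (if grow then tau * eps s else eps s);
          h2 = (if grow then 0 else h1)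
      in if z \<in> acc_set X f e (pts s)
         then \<lparr>cnt = cnt s + 1, eps = tau * e, hprev = h2, hcur = 0, pts = pts s @ [z]\<rparr>
         else \<lparr>cnt = cnt s, eps = e, hprev = hprev s, hcur = h2, pts = pts s\<rparr>))"

primrec ecp_run :: "'a::euclidean_space set \<Rightarrow> ('a \<Rightarrow> real) \<Rightarrow> nat \<Rightarrow> real \<Rightarrow> real \<Rightarrow> real
    \<Rightarrow> (nat \<Rightarrow> 'a) \<Rightarrow> nat \<Rightarrow> 'a ecp_state" where
  "ecp_run X f n tau e1 C w 0 = \<lparr>cnt = 1, eps = e1, hprev = 1, hcur = 0, pts = [w 0]\<rparr>"
| "ecp_run X f n tau e1 C w (Suc j) = ecp_step X f n tau C (w (Suc j)) (ecp_run X f n tau e1 C w j)"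

definition ecp_points :: "'a::euclidean_space set \<Rightarrow> ('a \<Rightarrow> real) \<Rightarrow> nat \<Rightarrow> real \<Rightarrow> real \<Rightarrow> real
    \<Rightarrow> (nat \<Rightarrow> 'a) \<Rightarrow> 'a list" where
  "ecp_points X f n tau e1 C w =
     pts (ecp_run X f n tau e1 C w (LEAST j. n \<le> cnt (ecp_run X f n tau e1 C w j)))"

definition ecp_regret :: "'a::euclidean_space set \<Rightarrow> ('a \<Rightarrow> real) \<Rightarrow> nat \<Rightarrow> real \<Rightarrow> real \<Rightarrow> real
    \<Rightarrow> (nat \<Rightarrow> 'a) \<Rightarrow> real" where
  "ecp_regret X f n tau e1 C w = Sup (f ` X) - Max (f ` set (ecp_points X f n tau e1 C w))"

end

theory Submission
  imports Defs
begin


lemma run_Suc: "ecp_run X f n tau e1 C w (Suc j) = ecp_step X f n tau C (w (Suc j)) (ecp_run X f n tau e1 C w j)"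
  by simp

lemma run_basic:
  "1 \<le> cnt (ecp_run X f n tau e1 C w j) \<and> cnt (ecp_run X f n tau e1 C w j) \<le> Suc j
   \<and> pts (ecp_run X f n tau e1 C w j) \<noteq> [] \<and> set (pts (ecp_run X f n tau e1 C w j)) \<subseteq> w ` {..j}"
proof (induction j)
  case 0
  then show ?case by simp
next
  case (Suc j)
  have sub: "w ` {..j} \<subseteq> w ` {..Suc j}" by auto
  have ws: "w (Suc j) \<in> w ` {..Suc j}" by auto
  show ?case using Suc sub ws
    by (auto simp: ecp_step_def Let_def)
qed

lemma run_mono_Suc:
  "cnt (ecp_run X f n tau e1 C w j) \<le> cnt (ecp_run X f n tau e1 C w (Suc j)) \<and>
   set (pts (ecp_run X f n tau e1 C w j)) \<subseteq> set (pts (ecp_run X f n tau e1 C w (Suc j)))"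
  by (auto simp: ecp_step_def Let_def)

lemma run_mono:
  assumes "i \<le> j"
  shows "cnt (ecp_run X f n tau e1 C w i) \<le> cnt (ecp_run X f n tau e1 C w j) \<and>
   set (pts (ecp_run X f n tau e1 C w i)) \<subseteq> set (pts (ecp_run X f n tau e1 C w j))"
  using assms
proof (induction j)
  case 0 then show ?case by simp
next
  case (Suc j)
  show ?case
  proof (cases "i = Suc j")
    case False
    then have "i \<le> j" using Suc.prems by simp
    then show ?thesis using Suc.IH run_mono_Suc[of X f n tau e1 C w j] by (meson order_trans)
  qed simp
qed

lemma run_frozen:
  "n \<le> cnt (ecp_run X f n tau e1 C w j) \<Longrightarrow> ecp_run X f n tau e1 C w (Suc j) = ecp_run X f n tau e1 C w j"
  by (simp add: ecp_step_def)

lemma run_inv1: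
  assumes "C \<ge> 0" "tau \<ge> 1" "e1 > 0"
  shows "0 < eps (ecp_run X f n tau e1 C w j) \<and>
     real (hcur (ecp_run X f n tau e1 C w j)) \<le> real (hprev (ecp_run X f n tau e1 C w j)) + C"
proof (induction j)
  case 0
  then show ?case using assms by simp
next
  case (Suc j)
  then show ?case using assms
    by (auto simp: ecp_step_def Let_def)
qed

lemma run_eps_mono_Suc:
  assumes "C \<ge> 0" "tau \<ge> 1" "e1 > 0"
  shows "eps (ecp_run X f n tau e1 C w j) \<le> eps (ecp_run X f n tau e1 C w (Suc j))"
proof -
  have p: "0 < eps (ecp_run X f n tau e1 C w j)" using run_inv1[OF assms] by blast
  have a: "eps (ecp_run X f n tau e1 C w j) \<le> tau * eps (ecp_run X f n tau e1 C w j)"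
    using p assms by simp
  have b: "eps (ecp_run X f n tau e1 C w j) \<le> tau * (tau * eps (ecp_run X f n tau e1 C w j))"
    using a assms p by (meson mult_le_cancel_right1 order_trans less_le_not_le mult_right_mono dual_order.trans le_cases)
  show ?thesis using a b by (auto simp: ecp_step_def Let_def)
qed

lemma run_inv2:
  assumes C0: "C \<ge> 0" and t0: "tau \<ge> t0" and t01: "t0 \<ge> 1" and e1: "e1 > 0"
    and B: "real B \<ge> 2 + real M * C"
  shows "cnt (ecp_run X f n tau e1 C w j) < n \<longrightarrow> (\<exists>m::nat. e1 * t0 ^ m \<le> eps (ecp_run X f n tau e1 C w j) \<and>
     real (hprev (ecp_run X f n tau e1 C w j)) \<le> 1 + real m * C \<and>
     (m < M \<longrightarrow> j \<le> m * B + hcur (ecp_run X f n tau e1 C w j)))"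
proof (induction j)
  case 0
  then show ?case using assms by (intro impI exI[of _ 0]) simp
next
  case (Suc j)
  define s where "s = ecp_run X f n tau e1 C w j"
  have tau1: "tau \<ge> 1" using t0 t01 by linarith
  have inv1: "0 < eps s" "real (hcur s) \<le> real (hprev s) + C"
    using run_inv1[OF C0 tau1 e1, of X f n w j] by (auto simp: s_def)
  show ?case
  proof
    assume lt: "cnt (ecp_run X f n tau e1 C w (Suc j)) < n"
    have lt0: "cnt s < n"
    proof (rule ccontr)
      assume "\<not> cnt s < n"
      then have "ecp_run X f n tau e1 C w (Suc j) = s" using run_frozen[of n X f tau e1 C w j] by (simp add: s_def)
      then show False using lt \<open>\<not> cnt s < n\<close> by simp
    qed
    then obtain m where m1: "e1 * t0 ^ m \<le> eps s" and m2: "real (hprev s) \<le> 1 + real m * C"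
      and m3: "m < M \<longrightarrow> j \<le> m * B + hcur s"
      using Suc.IH by (auto simp: s_def)
    have run: "ecp_run X f n tau e1 C w (Suc j) = ecp_step X f n tau C (w (Suc j)) s" by (simp add: s_def)
    have grow1: "e1 * t0 ^ Suc m \<le> tau * eps s"
    proof -
      have "e1 * t0 ^ Suc m = t0 * (e1 * t0 ^ m)" by simp
      also have "\<dots> \<le> tau * eps s" using m1 t0 t01 e1 inv1 
        by (meson mult_mono order_trans zero_le_one less_imp_le mult_nonneg_nonneg zero_le_power)
      finally show ?thesis .
    qed
    have grow2: "e1 * t0 ^ Suc m \<le> tau * (tau * eps s)"
    proof -
      have "0 \<le> tau * eps s" using tau1 inv1 by simp
      then have "tau * eps s \<le> tau * (tau * eps s)" using tau1
        by (simp add: mult_le_cancel_right1)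
      then show ?thesis using grow1 by linarith
    qed
    have hp: "real (hprev s) \<le> 1 + real (Suc m) * C" using m2 C0 by (simp add: algebra_simps)
    have jb: "m + 1 < M \<Longrightarrow> Suc j \<le> Suc m * B"
    proof -
      assume mM: "m + 1 < M"
      then have "j \<le> m * B + hcur s" using m3 by simp
      moreover have "real (hcur s) + 1 \<le> real B"
      proof -
        have "real (Suc m) * C \<le> real M * C" using mM C0 by (intro mult_right_mono) auto
        then show ?thesis using inv1 m2 B by (simp add: algebra_simps)
      qed
      then have "hcur s + 1 \<le> B" by linarith
      ultimately show ?thesis by simp
    qed
    show "\<exists>m::nat. e1 * t0 ^ m \<le> eps (ecp_run X f n tau e1 C w (Suc j)) \<and>
     real (hprev (ecp_run X f n tau e1 C w (Suc j))) \<le> 1 + real m * C \<and>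
     (m < M \<longrightarrow> Suc j \<le> m * B + hcur (ecp_run X f n tau e1 C w (Suc j)))"
    proof (cases "real (hcur s + 1) - real (hprev s) > C")
      case True
      show ?thesis
        apply (rule exI[of _ "Suc m"])
        using True lt0 grow1 grow2 hp jb C0
        unfolding run ecp_step_def Let_def by auto
    next
      case False
      show ?thesis
      proof (cases "w (Suc j) \<in> acc_set X f (eps s) (pts s)")
        case True
        have "real (hcur s + 1) \<le> 1 + real (Suc m) * C" using False m2 by (simp add: algebra_simps)
        then show ?thesis
          apply (intro exI[of _ "Suc m"])
          using True False lt0 grow1 jb
          unfolding run ecp_step_def Let_def by auto
      next
        case False2: False
        show ?thesis
          apply (intro exI[of _ m])
          using False2 False lt0 m1 m2 m3
          unfolding run ecp_step_def Let_def by auto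
      qed
    qed
  qed
qed

lemma eps_large:
  assumes C0: "C \<ge> 0" and t01: "t0 > 1" and e1: "e1 > 0"
  shows "\<exists>N. \<forall>n tau w i. tau \<ge> t0 \<longrightarrow> N \<le> i \<longrightarrow> cnt (ecp_run X f n tau e1 C w i) < n
     \<longrightarrow> R \<le> eps (ecp_run X f n tau e1 C w i)"
proof -
  obtain M where M: "R / e1 < t0 ^ M" using real_arch_pow[OF t01] by blast
  then have RM: "R \<le> e1 * t0 ^ M" using e1 by (simp add: field_simps)
  define B where "B = nat \<lceil>2 + real M * C\<rceil>"
  have B: "real B \<ge> 2 + real M * C" unfolding B_def by linarith
  show ?thesis
  proof (intro exI[of _ "M * B"] allI impI)
    fix n tau w i
    assume tau: "tau \<ge> t0" and iN: "M * B \<le> i" and lt: "cnt (ecp_run X f n tau e1 C w i) < n"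
    define s where "s = ecp_run X f n tau e1 C w i"
    have tau1: "tau \<ge> 1" using tau t01 by linarith
    have inv1: "0 < eps s" "real (hcur s) \<le> real (hprev s) + C"
      using run_inv1[OF C0 tau1 e1, of X f n w i] by (auto simp: s_def)
    obtain m where m1: "e1 * t0 ^ m \<le> eps s" and m2: "real (hprev s) \<le> 1 + real m * C"
      and m3: "m < M \<longrightarrow> i \<le> m * B + hcur s"
      using run_inv2[OF C0 tau _ e1 B, of X f n w i] lt t01 by (auto simp: s_def)
    show "R \<le> eps (ecp_run X f n tau e1 C w i)"
    proof (cases "m < M")
      case True
      have "real (Suc m) * C \<le> real M * C" using True C0 by (intro mult_right_mono) auto
      then have "real (hcur s) + 1 \<le> real B" using inv1 m2 B by (simp add: algebra_simps)
      then have "hcur s < B" by linarith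
      then have "i < Suc m * B" using m3 True by simp
      moreover have "Suc m * B \<le> M * B" using True by (intro mult_right_mono) auto
      ultimately show ?thesis using iN by simp
    next
      case False
      then have "t0 ^ M \<le> t0 ^ m" using t01 by (intro power_increasing) auto
      then have "e1 * t0 ^ M \<le> e1 * t0 ^ m" using e1 by simp
      then show ?thesis using RM m1 by (simp add: s_def)
    qed
  qed
qed

lemma step_cases:
  assumes "cnt s < n" "tau \<ge> 1" "eps s \<ge> 0"
  shows "\<exists>e \<ge> eps s. (z \<in> acc_set X f e (pts s) \<and> pts (ecp_step X f n tau C z s) = pts s @ [z]
            \<and> cnt (ecp_step X f n tau C z s) = Suc (cnt s))
          \<or> (z \<notin> acc_set X f e (pts s) \<and> pts (ecp_step X f n tau C z s) = pts s
            \<and> cnt (ecp_step X f n tau C z s) = cnt s)"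
proof (cases "real (hcur s + 1) - real (hprev s) > C")
  case True
  have "eps s \<le> tau * eps s" using assms by (simp add: mult_le_cancel_right1)
  then show ?thesis using True assms(1)
    by (intro exI[of _ "tau * eps s"]) (auto simp: ecp_step_def Let_def)
next
  case False
  then show ?thesis using assms(1)
    by (intro exI[of _ "eps s"]) (auto simp: ecp_step_def Let_def)
qed


type_synonym skel = "nat \<times> nat \<times> nat \<times> nat \<times> nat list"

definition dstep :: "'a::euclidean_space set \<Rightarrow> ('a \<Rightarrow> real) \<Rightarrow> nat \<Rightarrow> real \<Rightarrow> real \<Rightarrow> real \<Rightarrow> nat
   \<Rightarrow> skel \<Rightarrow> (nat \<Rightarrow> 'a) \<Rightarrow> skel" where
  "dstep X f n tau e1 C j d w = (case d of (c, g, hp, hc, idx) \<Rightarrow>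
     (if n \<le> c then d else
      (let h1 = hc + 1;
          grow = (real h1 - real hp > C);
          g' = (if grow then Suc g else g);
          h2 = (if grow then 0 else h1)
       in if w j \<in> acc_set X f (e1 * tau ^ g') (map w idx)
          then (Suc c, Suc g', h2, 0, idx @ [j])
          else (c, g', hp, h2, idx))))"

primrec drun :: "'a::euclidean_space set \<Rightarrow> ('a \<Rightarrow> real) \<Rightarrow> nat \<Rightarrow> real \<Rightarrow> real \<Rightarrow> real \<Rightarrow> nat
   \<Rightarrow> (nat \<Rightarrow> 'a) \<Rightarrow> skel" where
  "drun X f n tau e1 C 0 w = (1, 0, 1, 0, [0])"
| "drun X f n tau e1 C (Suc j) w = dstep X f n tau e1 C (Suc j) (drun X f n tau e1 C j w) w"

definition tostate :: "real \<Rightarrow> real \<Rightarrow> skel \<Rightarrow> (nat \<Rightarrow> 'a) \<Rightarrow> 'a ecp_state" where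
  "tostate e1 tau d w = (case d of (c, g, hp, hc, idx) \<Rightarrow>
     \<lparr>cnt = c, eps = e1 * tau ^ g, hprev = hp, hcur = hc, pts = map w idx\<rparr>)"

lemma run_drun: "ecp_run X f n tau e1 C w j = tostate e1 tau (drun X f n tau e1 C j w) w"
proof (induction j)
  case 0
  then show ?case by (simp add: tostate_def)
next
  case (Suc j)
  obtain c g hp hc idx where d: "drun X f n tau e1 C j w = (c, g, hp, hc, idx)"
    by (cases "drun X f n tau e1 C j w") auto
  have e: "tau * (e1 * tau ^ g) = e1 * tau ^ Suc g" by simp
  have e2: "tau * (e1 * tau ^ Suc g) = e1 * tau ^ Suc (Suc g)" by simp
  show ?case using Suc
    by (simp add: d tostate_def dstep_def ecp_step_def Let_def e e2 del: power_Suc)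
qed

locale msetup =
  fixes X :: "'a::euclidean_space set" and N :: "'a measure" and f :: "'a \<Rightarrow> real"
  assumes spN: "space N = X" and setsN: "sets N = sets (restrict_space borel X)"
    and Xsets: "X \<in> sets borel" and fcont: "continuous_on X f"
begin

abbreviation "MM \<equiv> PiM (UNIV :: nat set) (\<lambda>_. N)"

lemma spM: "w \<in> space MM \<Longrightarrow> w i \<in> X"
  by (auto simp: space_PiM spN)

lemma coordN: "(\<lambda>w. w i) \<in> measurable MM N" by simp

lemma idN: "(\<lambda>x. x) \<in> borel_measurable N"
proof -
  have "(\<lambda>x. x) \<in> measurable (restrict_space borel X) borel"
    by (rule measurable_restrict_space1) simp
  then show ?thesis by (subst measurable_cong_sets[OF setsN refl])
qed

lemma fN: "f \<in> borel_measurable N"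
  using borel_measurable_continuous_on_restrict[OF fcont] by (subst measurable_cong_sets[OF setsN refl])

lemma coord_borel[measurable]: "(\<lambda>w. w i) \<in> borel_measurable MM"
  using measurable_comp[OF coordN idN] by (simp add: comp_def)

lemma fcoord_borel[measurable]: "(\<lambda>w. f (w i)) \<in> borel_measurable MM"
  using measurable_comp[OF coordN fN] by (simp add: comp_def)

lemma acc_meas:
  "{w \<in> space MM. w j \<in> acc_set X f e (map w idx)} \<in> sets MM"
proof -
  have "{w \<in> space MM. w j \<in> acc_set X f e (map w idx)} =
    {w \<in> space MM. Max ((\<lambda>i. f (w i)) ` set idx) \<le> Min ((\<lambda>i. f (w i) + e * norm (w j - w i)) ` set idx)}"
    by (auto simp: acc_set_def image_image spM)
  also have "\<dots> \<in> sets MM" by measurable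
  finally show ?thesis .
qed

lemma dstep_meas: "(\<lambda>w. dstep X f n tau e1 C j d w) \<in> measurable MM (count_space UNIV)"
proof -
  obtain c g hp hc idx where d: "d = (c, g, hp, hc, idx)"
    by (cases d) auto
  show ?thesis
  proof (cases "n \<le> c")
    case True
    then show ?thesis by (simp add: d dstep_def)
  next
    case False
    then show ?thesis
      by (simp add: d dstep_def Let_def)
        (auto intro!: measurable_If acc_meas)
  qed
qed

lemma drun_meas: "(\<lambda>w. drun X f n tau e1 C j w) \<in> measurable MM (count_space UNIV)"
proof (induction j)
  case 0
  then show ?case by simp
next
  case (Suc j)
  show ?case
    using measurable_compose_countable'[where f="\<lambda>d w. dstep X f n tau e1 C (Suc j) d w", OF dstep_meas Suc]
    by simp
qed

lemma regret_meas: "ecp_regret X f n tau e1 C \<in> borel_measurable MM"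
proof -
  define L where "L w = (LEAST j. n \<le> fst (drun X f n tau e1 C j w))" for w
  define ix where "ix m w = snd (snd (snd (snd (drun X f n tau e1 C m w))))" for m w
  have cnt_eq: "cnt (ecp_run X f n tau e1 C w j) = fst (drun X f n tau e1 C j w)" for w j
    by (simp add: run_drun tostate_def split: prod.splits)
  have pts_eq: "pts (ecp_run X f n tau e1 C w j) = map w (ix j w)" for w j
    by (simp add: run_drun tostate_def ix_def split: prod.splits)
  have eq: "ecp_regret X f n tau e1 C w = Sup (f ` X) - Max ((\<lambda>i. f (w i)) ` set (ix (L w) w))" for w
    by (simp add: ecp_regret_def ecp_points_def cnt_eq pts_eq L_def image_image)
  have Lm: "L \<in> measurable MM (count_space UNIV)"
    unfolding L_def
    by (rule measurable_Least) (rule measurable_compose[OF drun_meas], simp)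
  have ixm: "(\<lambda>w. ix m w) \<in> measurable MM (count_space UNIV)" for m
    unfolding ix_def by (rule measurable_compose[OF drun_meas], simp)
  have H: "(\<lambda>w. Sup (f ` X) - Max ((\<lambda>i. f (w i)) ` set l)) \<in> borel_measurable MM" for l :: "nat list"
    by measurable
  have G: "(\<lambda>w. Sup (f ` X) - Max ((\<lambda>i. f (w i)) ` set (ix m w))) \<in> borel_measurable MM" for m
    using measurable_compose_countable'[where f="\<lambda>l w. Sup (f ` X) - Max ((\<lambda>i. f (w i)) ` set l)", OF H ixm]
    by simp
  show ?thesis
    unfolding eq using measurable_compose_countable'[where f="\<lambda>m w. Sup (f ` X) - Max ((\<lambda>i. f (w i)) ` set (ix m w))", OF G Lm]
    by simp
qed

end


locale pmsetup = msetup + prob_space N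
begin

lemma fst_borel[measurable]: "(\<lambda>p. fst p) \<in> borel_measurable (N \<Otimes>\<^sub>M N)"
  using measurable_comp[OF measurable_fst idN] by (simp add: comp_def)
lemma snd_borel[measurable]: "(\<lambda>p. snd p) \<in> borel_measurable (N \<Otimes>\<^sub>M N)"
  using measurable_comp[OF measurable_snd idN] by (simp add: comp_def)

lemma probM: "prob_space MM"
  by (rule prob_space_PiM) (rule prob_space_axioms)

lemma pair_distr:
  assumes ij: "i \<noteq> j"
  shows "distr MM (N \<Otimes>\<^sub>M N) (\<lambda>w. (w i, w j)) = N \<Otimes>\<^sub>M N"
proof (rule pair_measure_eqI[symmetric])
  show "sigma_finite_measure N" by (rule prob_space_imp_sigma_finite) (rule prob_space_axioms)
  then show "sigma_finite_measure N" .
  show "sets (N \<Otimes>\<^sub>M N) = sets (distr MM (N \<Otimes>\<^sub>M N) (\<lambda>w. (w i, w j)))" by simp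
  fix A B assume A: "A \<in> sets N" and B: "B \<in> sets N"
  have meas: "(\<lambda>w. (w i, w j)) \<in> measurable MM (N \<Otimes>\<^sub>M N)" by measurable
  have AB: "A \<times> B \<in> sets (N \<Otimes>\<^sub>M N)" using A B by simp
  define F where "F k = (if k = i then A else B)" for k
  have seteq: "(\<lambda>w. (w i, w j)) -` (A \<times> B) \<inter> space MM = prod_emb UNIV (\<lambda>_. N) {i, j} (Pi\<^sub>E {i, j} F)"
    using ij by (auto simp: prod_emb_def F_def PiE_iff space_PiM)
  have "emeasure (distr MM (N \<Otimes>\<^sub>M N) (\<lambda>w. (w i, w j))) (A \<times> B)
      = emeasure MM (prod_emb UNIV (\<lambda>_. N) {i, j} (Pi\<^sub>E {i, j} F))"
    by (simp add: emeasure_distr[OF meas AB] seteq)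
  also have "\<dots> = (\<Prod>k\<in>{i,j}. emeasure N (F k))"
    by (rule emeasure_PiM_emb) (auto simp: F_def A B prob_space_axioms)
  also have "\<dots> = emeasure N A * emeasure N B" using ij by (simp add: F_def)
  finally show "emeasure N A * emeasure N B = emeasure (distr MM (N \<Otimes>\<^sub>M N) (\<lambda>w. (w i, w j))) (A \<times> B)"
    by simp
qed

lemma close_bound:
  assumes ij: "i \<noteq> j" and eps: "\<And>x. x \<in> X \<Longrightarrow> measure N {y \<in> X. dist y x < r} \<le> e"
  shows "measure MM {w \<in> space MM. dist (w j) (w i) < r} \<le> e"
proof -
  interpret P: pair_sigma_finite N N
    by (simp add: pair_sigma_finite.intro prob_space_axioms prob_space_imp_sigma_finite)
  have e0: "0 \<le> e"
  proof -
    obtain x where "x \<in> X" using not_empty spN by blast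
    then show ?thesis using eps[of x] measure_nonneg[of N] by (meson order_trans)
  qed
  define D where "D = {p \<in> space (N \<Otimes>\<^sub>M N). dist (snd p) (fst p) < r}"
  have D: "D \<in> sets (N \<Otimes>\<^sub>M N)" unfolding D_def by measurable
  have meas: "(\<lambda>w. (w i, w j)) \<in> measurable MM (N \<Otimes>\<^sub>M N)" by measurable
  have seteq: "{w \<in> space MM. dist (w j) (w i) < r} = (\<lambda>w. (w i, w j)) -` D \<inter> space MM"
    by (auto simp: D_def space_pair_measure space_PiM)
  have "measure MM {w \<in> space MM. dist (w j) (w i) < r} = measure (distr MM (N \<Otimes>\<^sub>M N) (\<lambda>w. (w i, w j))) D"
    by (simp add: measure_distr[OF meas D] seteq)
  also have "\<dots> = measure (N \<Otimes>\<^sub>M N) D" by (simp add: pair_distr[OF ij])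
  also have "\<dots> \<le> e"
  proof -
    have "emeasure (N \<Otimes>\<^sub>M N) D = (\<integral>\<^sup>+x. emeasure N (Pair x -` D) \<partial>N)"
      by (rule emeasure_pair_measure_alt[OF D])
    also have "\<dots> \<le> (\<integral>\<^sup>+x. ennreal e \<partial>N)"
    proof (rule nn_integral_mono)
      fix x assume x: "x \<in> space N"
      have "Pair x -` D = {y \<in> X. dist y x < r}"
        using x by (auto simp: D_def space_pair_measure spN)
      then show "emeasure N (Pair x -` D) \<le> ennreal e"
        using eps[of x] x spN emeasure_eq_measure by (simp add: ennreal_leI)
    qed
    also have "\<dots> = ennreal e" by (simp add: emeasure_space_1)
    finally have "emeasure (N \<Otimes>\<^sub>M N) D \<le> ennreal e" .
    interpret Q: prob_space "N \<Otimes>\<^sub>M N" by (intro prob_space_pair prob_space_axioms)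
    show ?thesis
      using e0 Q.emeasure_eq_measure[of D] \<open>emeasure (N \<Otimes>\<^sub>M N) D \<le> ennreal e\<close>
      by (simp add: ennreal_le_iff)
  qed
  finally show ?thesis .
qed

end


lemma dist_small:
  fixes d e K :: real and m :: nat
  assumes "e * d < 2 * K" "2 * K * (real m + 1) + 1 \<le> e" "0 \<le> d" "0 \<le> K"
  shows "d < 1 / (real m + 1)"
proof -
  have "(2 * K * (real m + 1) + 1) * d \<le> e * d" using assms by (intro mult_right_mono) auto
  then have "(2 * K * (real m + 1) + 1) * d < 2 * K" using assms by linarith
  then have "(real m + 1) * d * (2 * K) + d < 2 * K" by (simp add: algebra_simps)
  then have "(real m + 1) * d * (2 * K) < 2 * K" using assms by linarith
  then have "(real m + 1) * d < 1"
    by (metis mult_less_cancel_right1 assms(4) less_le_not_le mult_nonneg_nonneg zero_le_numeral linorder_not_le mult_le_cancel_right1 mult.commute mult_less_cancel_left1)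
  then show ?thesis by (simp add: field_simps)
qed

locale main = pmsetup X N f for X :: "'a::euclidean_space set" and N f +
  fixes k e1 C t0 K :: real and tau :: "nat \<Rightarrow> real"
  assumes k0: "k \<ge> 0" and lip: "lip_on X k f" and e1: "e1 > 0" and C0: "C \<ge> 0" and t0: "t0 > 1"
   and tau: "\<And>n. tau n \<ge> t0" and Kb: "\<And>x. x \<in> X \<Longrightarrow> \<bar>f x\<bar> \<le> K"
   and small: "\<And>e. e > 0 \<Longrightarrow> \<exists>r>0. \<forall>x\<in>X. measure N {y\<in>X. dist y x < r} \<le> e"
   and pos: "\<And>\<delta>. \<delta> > 0 \<Longrightarrow> 0 < measure N {x\<in>X. Sup (f ` X) - \<delta> < f x}"
begin

definition Nf :: "real \<Rightarrow> nat" where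
  "Nf R = (SOME N. \<forall>n ta w i. ta \<ge> t0 \<longrightarrow> N \<le> i \<longrightarrow> cnt (ecp_run X f n ta e1 C w i) < n
     \<longrightarrow> R \<le> eps (ecp_run X f n ta e1 C w i))"

lemma Nf: "Nf R \<le> i \<Longrightarrow> cnt (ecp_run X f n (tau n) e1 C w i) < n \<Longrightarrow> R \<le> eps (ecp_run X f n (tau n) e1 C w i)"
  using someI_ex[OF eps_large[OF C0 t0 e1, of X f R]] tau unfolding Nf_def by blast

lemma tau1: "tau n \<ge> 1" using tau[of n] t0 by linarith

lemma K0: "K \<ge> 0"
proof -
  obtain x where "x \<in> X" using not_empty spN by blast
  then show ?thesis using Kb[of x] by linarith
qed

lemma eps_pos: "0 < eps (ecp_run X f n (tau n) e1 C w j)"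
  using run_inv1[OF C0 tau1 e1] by blast

definition RR :: "nat \<Rightarrow> real" where "RR m = 2 * K * (real m + 1) + 1"
definition jj :: "nat \<Rightarrow> nat \<Rightarrow> nat" where "jj J1 m = Suc (max J1 (Nf (RR m)))"
definition ZZ :: "nat \<Rightarrow> (nat \<Rightarrow> 'a) set" where
  "ZZ J1 = {w \<in> space MM. \<forall>m. \<exists>i\<le>J1. dist (w (jj J1 m)) (w i) < 1 / (real m + 1)}"

lemma ZZ_sets: "ZZ J1 \<in> sets MM"
  unfolding ZZ_def by measurable

lemma ZZ_null: "ZZ J1 \<in> null_sets MM"
proof -
  interpret PM: prob_space MM by (rule probM)
  have le: "measure MM (ZZ J1) \<le> e" if e: "e > 0" for e
  proof -
    define e' where "e' = e / (real J1 + 1)"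
    have e': "e' > 0" using e by (simp add: e'_def)
    obtain r where r: "r > 0" "\<forall>x\<in>X. measure N {y\<in>X. dist y x < r} \<le> e'" using small[OF e'] by blast
    obtain m where m: "1 / (real m + 1) < r"
    proof -
      obtain m0 :: nat where "m0 > 0" "inverse (real m0) < r" using ex_inverse_of_nat_less[OF r(1)] by blast
      then have "1 / (real m0 + 1) < r"
        by (smt (verit) divide_inverse frac_le inverse_eq_divide of_nat_0_less_iff mult_1)
      then show ?thesis using that by blast
    qed
    define j where "j = jj J1 m"
    have sub: "ZZ J1 \<subseteq> (\<Union>i\<in>{..J1}. {w \<in> space MM. dist (w j) (w i) < 1 / (real m + 1)})"
      unfolding ZZ_def j_def by blast
    have each: "measure MM {w \<in> space MM. dist (w j) (w i) < 1 / (real m + 1)} \<le> e'" if i: "i \<le> J1" for i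
    proof (rule close_bound)
      show "i \<noteq> j" using i by (simp add: j_def jj_def)
      fix x assume x: "x \<in> X"
      have "{y \<in> X. dist y x < r} \<in> sets N"
      proof -
        have "{y \<in> space N. dist y x < r} \<in> sets N" using idN by measurable
        then show ?thesis by (simp add: spN)
      qed
      then have "measure N {y \<in> X. dist y x < 1 / (real m + 1)} \<le> measure N {y \<in> X. dist y x < r}"
        using m by (intro finite_measure_mono) auto
      then show "measure N {y \<in> X. dist y x < 1 / (real m + 1)} \<le> e'" using r x by fastforce
    qed
    have "measure MM (ZZ J1) \<le> measure MM (\<Union>i\<in>{..J1}. {w \<in> space MM. dist (w j) (w i) < 1 / (real m + 1)})"
      by (rule PM.finite_measure_mono[OF sub]) measurable
    also have "\<dots> \<le> (\<Sum>i\<in>{..J1}. measure MM {w \<in> space MM. dist (w j) (w i) < 1 / (real m + 1)})"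
      by (rule measure_UNION_le) (auto, measurable)
    also have "\<dots> \<le> (\<Sum>i\<in>{..J1}. e')" by (rule sum_mono) (use each in auto)
    also have "\<dots> = e" by (simp add: e'_def field_simps)
    finally show ?thesis .
  qed
  have "measure MM (ZZ J1) = 0"
    using le measure_nonneg[of MM "ZZ J1"] by (meson dense_le linorder_not_le order_antisym)
  then have "emeasure MM (ZZ J1) = 0" using PM.emeasure_eq_measure by simp
  then show ?thesis using ZZ_sets by (simp add: null_sets_def)
qed

abbreviation rn :: "nat \<Rightarrow> (nat \<Rightarrow> 'a) \<Rightarrow> nat \<Rightarrow> 'a ecp_state" where
  "rn n w j \<equiv> ecp_run X f n (tau n) e1 C w j"

lemma pts_stable:
  assumes "\<forall>j \<ge> J1. cnt (rn n w j) = cnt (rn n w J1)" "cnt (rn n w J1) < n"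
  shows "pts (rn n w (J1 + d)) = pts (rn n w J1)"
proof (induction d)
  case 0 then show ?case by (simp only: add_0_right)
next
  case (Suc d)
  define s where "s = rn n w (J1 + d)"
  have ce: "cnt s = cnt (rn n w J1)" using assms(1) unfolding s_def by (meson le_add1)
  have cs: "cnt s < n" using assms(2) ce by simp
  have run: "rn n w (J1 + Suc d) = ecp_step X f n (tau n) C (w (Suc (J1 + d))) s" by (simp add: s_def)
  have c1: "cnt (rn n w (J1 + Suc d)) = cnt s"
  proof -
    have "J1 \<le> J1 + Suc d" by simp
    then have "cnt (rn n w (J1 + Suc d)) = cnt (rn n w J1)" using assms(1) by blast
    then show ?thesis using ce by simp
  qed
  have sp: "0 \<le> eps s" using eps_pos unfolding s_def by (simp add: less_imp_le)
  from step_cases[OF cs tau1[of n] sp, where X=X and f=f and C=C and z="w (Suc (J1 + d))"]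
  have "pts (rn n w (J1 + Suc d)) = pts s" using c1 unfolding run[symmetric] by (metis n_not_Suc_n)
  then show ?case using Suc by (simp add: s_def)
qed

lemma nt_in_Z:
  assumes w: "w \<in> space MM" and nt: "\<forall>j. cnt (rn n w j) < n"
  shows "w \<in> (\<Union>J1. ZZ J1)"
proof -
  define c where "c j = cnt (rn n w j)" for j
  have cn: "c j < n" for j using nt unfolding c_def by blast
  have "range c \<subseteq> {..n}" using cn by (blast intro: less_imp_le)
  then have fin: "finite (range c)" using finite_subset by blast
  obtain J1 where J1: "c J1 = Max (range c)" using Max_in[OF fin] by auto
  have stab: "\<forall>j \<ge> J1. c j = c J1"
  proof (intro allI impI)
    fix j assume "J1 \<le> j"
    then have "c J1 \<le> c j" using run_mono[of J1 j X f n "tau n" e1 C w] unfolding c_def by blast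
    moreover have "c j \<le> c J1" using J1 fin by simp
    ultimately show "c j = c J1" by simp
  qed
  have "w \<in> ZZ J1"
    unfolding ZZ_def
  proof (intro CollectI conjI allI w)
    fix m
    define j' where "j' = max J1 (Nf (RR m))"
    define s where "s = rn n w j'"
    have jj: "jj J1 m = Suc j'" by (simp add: jj_def j'_def)
    have cs: "cnt s < n" using nt by (simp add: s_def)
    have epsR: "RR m \<le> eps s" using Nf[of "RR m" j' n w] cs by (simp add: s_def j'_def)
    have run: "rn n w (Suc j') = ecp_step X f n (tau n) C (w (Suc j')) s" by (simp add: s_def)
    have "c (Suc j') = c J1" "c j' = c J1"
      using stab[rule_format, of "Suc j'"] stab[rule_format, of j'] by (auto simp: j'_def)
    then have c1: "cnt (rn n w (Suc j')) = cnt s" by (simp add: c_def s_def)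
    have st2: "\<forall>j\<ge>J1. cnt (rn n w j) = cnt (rn n w J1)" using stab unfolding c_def .
    have "pts (rn n w (J1 + (j' - J1))) = pts (rn n w J1)" by (rule pts_stable[OF st2 nt[rule_format]])
    moreover have "J1 + (j' - J1) = j'" by (simp add: j'_def)
    ultimately have ps: "pts s = pts (rn n w J1)" by (simp add: s_def)
    have sp: "0 \<le> eps s" using eps_pos unfolding s_def by (simp add: less_imp_le)
    from step_cases[OF cs tau1[of n] sp, where X=X and f=f and C=C and z="w (Suc j')"]
    obtain e where e: "e \<ge> eps s" "w (Suc j') \<notin> acc_set X f e (pts s)"
      using c1 unfolding run[symmetric] by (metis n_not_Suc_n)
    have wX: "w (Suc j') \<in> X" using spM[OF w] .
    have basic: "pts s \<noteq> []" "set (pts (rn n w J1)) \<subseteq> w ` {..J1}"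
      using run_basic[of X f n "tau n" e1 C w] by (auto simp: s_def)
    have sX: "set (pts s) \<subseteq> X" using run_basic[of X f n "tau n" e1 C w j'] spM[OF w] by (auto simp: s_def)
    have "\<not> Max (f ` set (pts s)) \<le> Min ((\<lambda>xi. f xi + e * norm (w (Suc j') - xi)) ` set (pts s))"
      using e(2) wX by (simp add: acc_set_def)
    then have lt: "Min ((\<lambda>xi. f xi + e * norm (w (Suc j') - xi)) ` set (pts s)) < Max (f ` set (pts s))"
      by (simp only: not_le)
    have "Min ((\<lambda>xi. f xi + e * norm (w (Suc j') - xi)) ` set (pts s)) \<in> (\<lambda>xi. f xi + e * norm (w (Suc j') - xi)) ` set (pts s)"
      by (rule Min_in) (use basic(1) in auto)
    then obtain xi where "xi \<in> set (pts s)" "Min ((\<lambda>xi. f xi + e * norm (w (Suc j') - xi)) ` set (pts s)) = f xi + e * norm (w (Suc j') - xi)"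
      by blast
    then have xi: "xi \<in> set (pts s)" "f xi + e * norm (w (Suc j') - xi) < Max (f ` set (pts s))"
      using lt by auto
    have "Max (f ` set (pts s)) \<in> f ` set (pts s)" by (rule Max_in) (use basic(1) in auto)
    then obtain xm where xm: "xm \<in> set (pts s)" "Max (f ` set (pts s)) = f xm" by blast
    have "\<bar>f xi\<bar> \<le> K" "\<bar>f xm\<bar> \<le> K" using Kb sX xi xm by auto
    then have "e * norm (w (Suc j') - xi) < 2 * K" using xi xm by linarith
    then have d: "norm (w (Suc j') - xi) < 1 / (real m + 1)"
      using dist_small[of e "norm (w (Suc j') - xi)" K m] epsR e K0 by (simp add: RR_def)
    obtain i where i: "i \<le> J1" "xi = w i" using xi ps basic(2) by auto
    show "\<exists>i\<le>J1. dist (w (jj J1 m)) (w i) < 1 / (real m + 1)"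
      using i d jj by (auto simp: dist_norm)
  qed
  then show ?thesis by blast
qed


lemma bdd: "bdd_above (f ` X)"
  using Kb by (intro bdd_aboveI[of _ K]) (auto dest: abs_le_D1)

lemma bad_sub:
  assumes d: "\<delta> > 0" and w: "w \<in> space MM" and nZ: "w \<notin> (\<Union>J1. ZZ J1)"
    and bad: "\<bar>ecp_regret X f n (tau n) e1 C w\<bar> > \<delta>" and j: "Suc (Nf k) \<le> j" "j < n"
  shows "w j \<in> X - {x\<in>X. Sup (f ` X) - \<delta> < f x}"
proof -
  have trm: "\<exists>J. n \<le> cnt (rn n w J)" using nt_in_Z[OF w] nZ by (meson not_less)
  define L where "L = (LEAST J. n \<le> cnt (rn n w J))"
  have L: "n \<le> cnt (rn n w L)" using LeastI_ex[OF trm] by (simp add: L_def)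
  define Pf where "Pf = set (pts (rn n w L))"
  have reg: "ecp_regret X f n (tau n) e1 C w = Sup (f ` X) - Max (f ` Pf)"
    by (simp add: ecp_regret_def ecp_points_def L_def Pf_def)
  have PfX: "Pf \<subseteq> X" "Pf \<noteq> {}" "finite Pf"
    using run_basic[of X f n "tau n" e1 C w L] spM[OF w] by (auto simp: Pf_def)
  have "Max (f ` Pf) \<in> f ` Pf" by (rule Max_in) (use PfX in auto)
  then have "Max (f ` Pf) \<in> f ` X" using PfX by blast
  then have MS: "Max (f ` Pf) \<le> Sup (f ` X)" using bdd by (intro cSup_upper)
  have regd: "Sup (f ` X) - Max (f ` Pf) > \<delta>" using bad reg MS by linarith
  obtain j' where j': "j = Suc j'" using j by (cases j) auto
  have j'N: "Nf k \<le> j'" using j j' by simp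
  define s where "s = rn n w j'"
  have cs: "cnt s < n" using run_basic[of X f n "tau n" e1 C w j'] j j' by (simp add: s_def)
  have jL: "Suc j' \<le> L"
  proof (rule ccontr)
    assume "\<not> Suc j' \<le> L"
    then have "L \<le> j'" by simp
    then have "cnt (rn n w L) \<le> cnt s" using run_mono[of L j' X f n "tau n" e1 C w] by (simp add: s_def)
    then show False using L cs by simp
  qed
  have subL: "set (pts (rn n w (Suc j'))) \<subseteq> Pf" "set (pts s) \<subseteq> Pf"
    using run_mono[OF jL, of X f n "tau n" e1 C w] run_mono[of j' L X f n "tau n" e1 C w] jL
    by (auto simp: Pf_def s_def)
  have epsk: "k \<le> eps s" using Nf[OF j'N] cs by (simp add: s_def)
  have sp: "0 \<le> eps s" using eps_pos unfolding s_def by (simp add: less_imp_le)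
  have run: "rn n w (Suc j') = ecp_step X f n (tau n) C (w (Suc j')) s" by (simp add: s_def)
  have wX: "w j \<in> X" using spM[OF w] .
  have sX: "set (pts s) \<subseteq> X" "pts s \<noteq> []"
    using run_basic[of X f n "tau n" e1 C w j'] spM[OF w] by (auto simp: s_def)
  have fle: "f (w j) \<le> Max (f ` Pf)"
  proof -
    from step_cases[OF cs tau1[of n] sp, where X=X and f=f and C=C and z="w (Suc j')"]
    obtain e where e: "e \<ge> eps s" and
      br: "(w (Suc j') \<in> acc_set X f e (pts s) \<and> pts (rn n w (Suc j')) = pts s @ [w (Suc j')])
          \<or> (w (Suc j') \<notin> acc_set X f e (pts s))"
      unfolding run[symmetric] by blast
    show ?thesis
    proof (cases "w (Suc j') \<notin> acc_set X f e (pts s)")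
      case False
      then have "pts (rn n w (Suc j')) = pts s @ [w (Suc j')]" using br by blast
      then have "w j \<in> Pf" using subL j' by auto
      then show ?thesis using PfX by simp
    next
      case True
      then have "\<not> Max (f ` set (pts s)) \<le> Min ((\<lambda>xi. f xi + e * norm (w j - xi)) ` set (pts s))"
        using wX j' by (simp add: acc_set_def)
      then have lt: "Min ((\<lambda>xi. f xi + e * norm (w j - xi)) ` set (pts s)) < Max (f ` set (pts s))"
        by (simp only: not_le)
      have "Min ((\<lambda>xi. f xi + e * norm (w j - xi)) ` set (pts s)) \<in> (\<lambda>xi. f xi + e * norm (w j - xi)) ` set (pts s)"
        by (rule Min_in) (use sX in auto)
      then obtain xi where "xi \<in> set (pts s)" "Min ((\<lambda>xi. f xi + e * norm (w j - xi)) ` set (pts s)) = f xi + e * norm (w j - xi)"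
        by blast
      then have xi: "xi \<in> set (pts s)" "f xi + e * norm (w j - xi) < Max (f ` set (pts s))"
        using lt by auto
      have "\<bar>f (w j) - f xi\<bar> \<le> k * norm (w j - xi)" using lip wX xi sX unfolding lip_on_def by blast
      moreover have "k * norm (w j - xi) \<le> e * norm (w j - xi)" using epsk e by (intro mult_right_mono) auto
      ultimately have "f (w j) < Max (f ` set (pts s))" using xi by linarith
      moreover have "Max (f ` set (pts s)) \<le> Max (f ` Pf)"
        using subL sX PfX by (intro Max_mono) auto
      ultimately show ?thesis by linarith
    qed
  qed
  show ?thesis
  proof
    show "w j \<in> X" by (rule wX)
    show "w j \<notin> {x \<in> X. Sup (f ` X) - \<delta> < f x}"
    proof
      assume "w j \<in> {x \<in> X. Sup (f ` X) - \<delta> < f x}"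
      then show False using fle regd by simp
    qed
  qed
qed


theorem conv:
  assumes d: "\<delta> > 0"
  shows "(\<lambda>n. measure MM {w \<in> space MM. \<bar>ecp_regret X f n (tau n) e1 C w\<bar> > \<delta>}) \<longlonglongrightarrow> 0"
proof -
  interpret PM: prob_space MM by (rule probM)
  define S where "S = {x\<in>X. Sup (f ` X) - \<delta> < f x}"
  have Ssets: "S \<in> sets N"
  proof -
    have "{x\<in>space N. Sup (f ` X) - \<delta> < f x} \<in> sets N" using fN by measurable
    then show ?thesis by (simp add: S_def spN)
  qed
  define p where "p = measure N S"
  have p: "0 < p" using pos[OF d] by (simp add: p_def S_def)
  define q where "q = measure N (X - S)"
  have q: "q = 1 - p" using prob_compl[OF Ssets] by (simp add: q_def p_def spN)
  have p1: "p \<le> 1" unfolding p_def by (rule prob_le_1)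
  have q0: "0 \<le> q" "q < 1" using q p p1 by auto
  have XS: "X - S \<in> sets N" using Ssets spN by (metis sets.compl_sets)
  define Z where "Z = (\<Union>J1. ZZ J1)"
  have Znull: "Z \<in> null_sets MM" unfolding Z_def using ZZ_null by blast
  have Zsets: "Z \<in> sets MM" using Znull by blast
  have mZ: "measure MM Z = 0" using Znull by (simp add: measure_def null_sets_def)
  define N0 where "N0 = Suc (Nf k)"
  have bound: "measure MM {w \<in> space MM. \<bar>ecp_regret X f n (tau n) e1 C w\<bar> > \<delta>} \<le> q ^ (n - N0)"
    if n: "N0 \<le> n" for n
  proof -
    define Jn where "Jn = {N0..<n}"
    define G where "G = prod_emb UNIV (\<lambda>_. N) Jn (Pi\<^sub>E Jn (\<lambda>_. X - S))"
    have Gsets: "G \<in> sets MM" unfolding G_def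
      by (rule sets_PiM_I) (auto simp: Jn_def XS)
    have "emeasure MM G = (\<Prod>i\<in>Jn. emeasure N (X - S))"
      unfolding G_def by (rule emeasure_PiM_emb) (auto simp: Jn_def XS prob_space_axioms)
    also have "\<dots> = (\<Prod>i\<in>Jn. ennreal q)" by (simp add: q_def emeasure_eq_measure)
    also have "\<dots> = ennreal (q ^ (n - N0))" using q0 by (simp add: prod_ennreal Jn_def ennreal_power)
    finally have mG: "measure MM G = q ^ (n - N0)" using q0 by (simp add: measure_def)
    have sub: "{w \<in> space MM. \<bar>ecp_regret X f n (tau n) e1 C w\<bar> > \<delta>} \<subseteq> Z \<union> G"
    proof
      fix w assume w: "w \<in> {w \<in> space MM. \<bar>ecp_regret X f n (tau n) e1 C w\<bar> > \<delta>}"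
      show "w \<in> Z \<union> G"
      proof (cases "w \<in> Z")
        case False
        have "w j \<in> X - S" if "j \<in> Jn" for j
          using bad_sub[OF d, of w n j] w False that by (auto simp: Z_def Jn_def N0_def S_def)
        then have "w \<in> G" using w by (auto simp: G_def prod_emb_def PiE_iff space_PiM)
        then show ?thesis by blast
      qed blast
    qed
    have "measure MM {w \<in> space MM. \<bar>ecp_regret X f n (tau n) e1 C w\<bar> > \<delta>} \<le> measure MM (Z \<union> G)"
      using sub Zsets Gsets by (intro PM.finite_measure_mono) auto
    also have "\<dots> \<le> measure MM Z + measure MM G" using Zsets Gsets by (rule measure_Un_le)
    finally show ?thesis using mZ mG by simp
  qed
  have lim: "(\<lambda>n. q ^ (n - N0)) \<longlonglongrightarrow> 0"
  proof (rule LIMSEQ_offset[where k = N0])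
    have "(\<lambda>n. q ^ n) \<longlonglongrightarrow> 0" using q0 by (intro LIMSEQ_power_zero) simp
    then show "(\<lambda>n. q ^ (n + N0 - N0)) \<longlonglongrightarrow> 0" by simp
  qed
  show ?thesis
  proof (rule tendsto_sandwich[OF _ _ tendsto_const lim])
    show "\<forall>\<^sub>F n in sequentially. 0 \<le> measure MM {w \<in> space MM. \<bar>ecp_regret X f n (tau n) e1 C w\<bar> > \<delta>}"
      by simp
    show "\<forall>\<^sub>F n in sequentially. measure MM {w \<in> space MM. \<bar>ecp_regret X f n (tau n) e1 C w\<bar> > \<delta>} \<le> q ^ (n - N0)"
      using bound by (intro eventually_sequentiallyI[of N0]) auto
  qed
qed

end


context
  fixes X :: "'a::euclidean_space set"
  assumes cpt: "compact X" and intX: "interior X \<noteq> {}"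
begin

lemma X_borel: "X \<in> sets borel"
  using cpt by (intro borel_closed compact_imp_closed)

lemma volX_fin: "emeasure lborel X < \<infinity>"
  using cpt by (intro emeasure_bounded_finite compact_imp_bounded)

lemma ball_pos: "r > 0 \<Longrightarrow> 0 < measure lborel (ball (c::'a) r)"
  using content_ball_pos by blast

lemma ball_fm: "ball (c::'a) r \<in> fmeasurable lborel"
  using emeasure_lborel_ball_finite by (auto simp: fmeasurable_def)

lemma volX_pos: "0 < measure lborel X"
proof -
  obtain c where "c \<in> interior X" using intX by blast
  then obtain r where r: "r > 0" "ball c r \<subseteq> X" using mem_interior by blast
  have XF: "X \<in> fmeasurable lborel" using volX_fin X_borel by (auto simp: fmeasurable_def)
  have "measure lborel (ball c r) \<le> measure lborel X"
    using r XF by (intro measure_mono_fmeasurable) auto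
  then show ?thesis using ball_pos[OF r(1), of c] by linarith
qed

lemma volX_ne: "emeasure lborel X \<noteq> 0"
  using volX_pos by (metis measure_def enn2real_0 less_irrefl)

abbreviation "mu \<equiv> restrict_space (uniform_measure lborel X) X"

lemma mu_space: "space mu = X" by (simp add: space_restrict_space)

lemma mu_sets: "sets mu = sets (restrict_space borel X)"
  by (simp add: sets_restrict_space)

lemma mu_prob: "prob_space mu"
  using X_borel volX_ne volX_fin
  by (intro prob_space_restrict_space) (auto simp: emeasure_uniform_measure_1)

lemma mu_measure: "A \<in> sets borel \<Longrightarrow> A \<subseteq> X \<Longrightarrow> measure mu A = measure lborel A / measure lborel X"
proof -
  assume A: "A \<in> sets borel" "A \<subseteq> X"
  have "measure mu A = measure (uniform_measure lborel X) A"
    using A X_borel by (intro measure_restrict_space) auto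
  also have "\<dots> = measure lborel (X \<inter> A) / measure lborel X"
    using A volX_ne volX_fin by (intro measure_uniform_measure) auto
  also have "X \<inter> A = A" using A by blast
  finally show ?thesis .
qed

lemma mu_small:
  assumes e: "e > 0"
  shows "\<exists>r>0. \<forall>x\<in>X. measure mu {y\<in>X. dist y x < r} \<le> e"
proof -
  define U where "U = measure lborel (ball (0::'a) 1)"
  have U0: "U \<ge> 0" by (simp add: U_def)
  have cb: "measure lborel (ball (x::'a) r) = U * r ^ DIM('a)" if "r \<ge> 0" for x r
    using content_ball[OF that, of x] content_ball[of 1 "0::'a"] by (simp add: U_def)
  define V where "V = measure lborel X"
  have V: "V > 0" using volX_pos by (simp add: V_def)
  define r where "r = min 1 (e * V / (U + 1))"
  have r0: "r > 0" using e V U0 by (simp add: r_def)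
  have r1: "r \<le> 1" by (simp add: r_def)
  have rD: "r ^ DIM('a) \<le> r"
    using power_decreasing[of 1 "DIM('a)" r] r0 r1 DIM_positive[where 'a='a] by simp
  have Ur: "U * r \<le> e * V"
  proof -
    have "U * r \<le> (U + 1) * r" using r0 by (simp add: algebra_simps)
    also have "\<dots> \<le> (U + 1) * (e * V / (U + 1))" using U0 by (intro mult_left_mono) (auto simp: r_def)
    also have "\<dots> = e * V" using U0 by simp
    finally show ?thesis .
  qed
  show ?thesis
  proof (intro exI[of _ r] conjI ballI r0)
    fix x assume x: "x \<in> X"
    have B: "{y\<in>X. dist y x < r} \<in> sets borel"
    proof -
      have "{y\<in>X. dist y x < r} = X \<inter> ball x r" by (auto simp: dist_commute)
      then show ?thesis using X_borel by simp
    qed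
    have "measure mu {y\<in>X. dist y x < r} = measure lborel {y\<in>X. dist y x < r} / V"
      using mu_measure[OF B] by (auto simp: V_def)
    also have "\<dots> \<le> measure lborel (ball x r) / V"
      using V B by (intro divide_right_mono measure_mono_fmeasurable ball_fm) (auto simp: dist_commute)
    also have "\<dots> = U * r ^ DIM('a) / V" using cb r0 by simp
    also have "\<dots> \<le> U * r / V" using V U0 rD by (intro divide_right_mono mult_left_mono) auto
    also have "\<dots> \<le> e" using Ur V by (simp add: field_simps)
    finally show "measure mu {y\<in>X. dist y x < r} \<le> e" .
  qed
qed

lemma mu_pos:
  fixes f :: "'a \<Rightarrow> real" and k :: real
  assumes cvx: "convex X" and k0: "k \<ge> 0" and lip: "lip_on X k f" and d: "\<delta> > 0"
    and fc: "continuous_on X f"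
  shows "0 < measure mu {x\<in>X. Sup (f ` X) - \<delta> < f x}"
proof -
  have Xne: "X \<noteq> {}" using intX interior_subset by blast
  obtain xs where xs: "xs \<in> X" "\<forall>y\<in>X. f y \<le> f xs" using continuous_attains_sup[OF cpt Xne fc] by blast
  have bdd: "bdd_above (f ` X)" using xs by (auto intro: bdd_aboveI[of _ "f xs"])
  have sup: "Sup (f ` X) = f xs"
    using xs Xne by (intro antisym cSup_least cSup_upper bdd) auto
  obtain c where c: "c \<in> interior X" using intX by blast
  define r where "r = \<delta> / (k + 1)"
  have r0: "r > 0" using d k0 by (simp add: r_def)
  define t where "t = min 1 (r / (2 * (norm (xs - c) + 1)))"
  have "0 < 2 * (norm (xs - c) + 1)" by (intro mult_pos_pos add_nonneg_pos) auto
  then have "r / (2 * (norm (xs - c) + 1)) > 0" using r0 by (intro divide_pos_pos)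
  then have t0: "t > 0" "t \<le> 1" by (auto simp: t_def)
  define y where "y = xs - t *\<^sub>R (xs - c)"
  have yint: "y \<in> interior X" unfolding y_def by (rule mem_interior_convex_shrink[OF cvx c xs(1) t0])
  have dy: "dist xs y < r"
  proof -
    have "dist xs y = t * norm (xs - c)" using t0 by (simp add: y_def dist_norm)
    also have "\<dots> \<le> r / (2 * (norm (xs - c) + 1)) * norm (xs - c)"
      by (intro mult_right_mono) (auto simp: t_def)
    also have "\<dots> < r"
    proof -
      define nc where "nc = norm (xs - c)"
      have nc0: "nc \<ge> 0" by (simp add: nc_def)
      have den: "0 < 2 * (nc + 1)" using nc0 by (simp add: algebra_simps)
      have "nc < 2 * (nc + 1)" using nc0 by (simp add: algebra_simps)
      then have "nc / (2 * (nc + 1)) < 1" using den by (simp add: divide_less_eq)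
      then have "r * (nc / (2 * (nc + 1))) < r * 1" using r0
        by (intro mult_strict_left_mono) auto
      then show ?thesis by (simp add: nc_def)
    qed
    finally show ?thesis .
  qed
  obtain e where e: "e > 0" "ball y e \<subseteq> X" using yint mem_interior by blast
  define rho where "rho = min e (r - dist xs y)"
  have rho: "rho > 0" using e dy by (simp add: rho_def)
  have sub: "ball y rho \<subseteq> {x\<in>X. Sup (f ` X) - \<delta> < f x}"
  proof
    fix z assume z: "z \<in> ball y rho"
    have zX: "z \<in> X" using z e by (auto simp: rho_def)
    have "dist xs z \<le> dist xs y + dist y z" by (rule dist_triangle)
    also have "\<dots> < r" using z by (auto simp: rho_def)
    finally have dz: "norm (z - xs) < r" by (simp add: dist_norm norm_minus_commute)
    have "\<bar>f z - f xs\<bar> \<le> k * norm (z - xs)" using lip zX xs(1) unfolding lip_on_def by blast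
    moreover have "k * norm (z - xs) \<le> k * r" using dz k0 by (intro mult_left_mono) auto
    moreover have "k * r < \<delta>"
    proof -
      have "k * r = \<delta> * (k / (k + 1))" by (simp add: r_def)
      also have "\<dots> < \<delta> * 1" using d k0 by (intro mult_strict_left_mono) auto
      finally show ?thesis by simp
    qed
    ultimately have "Sup (f ` X) - \<delta> < f z" using sup by linarith
    then show "z \<in> {x\<in>X. Sup (f ` X) - \<delta> < f x}" using zX by blast
  qed
  have Sb: "{x\<in>X. Sup (f ` X) - \<delta> < f x} \<in> sets mu"
  proof -
    have "f \<in> borel_measurable mu"
      using borel_measurable_continuous_on_restrict[OF fc] by (subst measurable_cong_sets[OF mu_sets refl])
    then have "{x\<in>space mu. Sup (f ` X) - \<delta> < f x} \<in> sets mu" by measurable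
    then show ?thesis by (simp add: mu_space)
  qed
  interpret P: prob_space mu by (rule mu_prob)
  have "0 < measure lborel (ball y rho) / measure lborel X"
    using ball_pos[OF rho] volX_pos by simp
  also have "\<dots> = measure mu (ball y rho)"
    using e by (intro mu_measure[symmetric]) (auto simp: rho_def)
  also have "\<dots> \<le> measure mu {x\<in>X. Sup (f ` X) - \<delta> < f x}"
    using sub Sb by (intro P.finite_measure_mono)
  finally show ?thesis .
qed

end


theorem theorem2:
  fixes X :: "'a::euclidean_space set" and f :: "'a \<Rightarrow> real"
    and k e1 C :: real and tau :: "nat \<Rightarrow> nat \<Rightarrow> real"
  assumes "convex X" and "compact X" and "interior X \<noteq> {}"
    and "k \<ge> 0" and "lip_on X k f"
    and "e1 > 0" and "C > 1"
    and "\<forall>n d. tau n d > 1"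
    and "\<forall>n n' d d'. n \<le> n' \<longrightarrow> d \<le> d' \<longrightarrow> tau n d \<le> tau n' d'"
  defines "M \<equiv> PiM (UNIV :: nat set) (\<lambda>_. restrict_space (uniform_measure lborel X) X)"
  shows "(\<forall>n. ecp_regret X f n (tau n DIM('a)) e1 C \<in> borel_measurable M) \<and>
         (\<forall>\<delta>>0. (\<lambda>n. measure M {w \<in> space M. \<bar>ecp_regret X f n (tau n DIM('a)) e1 C w\<bar> > \<delta>})
                  \<longlonglongrightarrow> 0)"
proof -
  note cvx = assms(1) and cpt = assms(2) and intX = assms(3) and k0 = assms(4) and lip = assms(5)
    and e1 = assms(6) and C1 = assms(7) and tau1 = assms(8) and taum = assms(9)
  have fc: "continuous_on X f"
  proof (rule lipschitz_on_continuous_on)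
    show "k-lipschitz_on X f" using lip k0 unfolding lip_on_def lipschitz_on_def by (simp add: dist_norm dist_real_def)
  qed
  obtain K where K: "\<forall>x\<in>f ` X. norm x \<le> K"
    using compact_imp_bounded[OF compact_continuous_image[OF fc cpt]] bounded_iff by blast
  have Kb: "\<And>x. x \<in> X \<Longrightarrow> \<bar>f x\<bar> \<le> K" using K by auto
  define mu where "mu = restrict_space (uniform_measure lborel X) X"
  have ms: "msetup X mu f"
    by (rule msetup.intro) (auto simp: mu_def mu_space[OF cpt intX] mu_sets[OF cpt intX] X_borel[OF cpt intX] fc)
  have pm: "pmsetup X mu f"
    by (rule pmsetup.intro[OF ms]) (simp add: mu_def mu_prob[OF cpt intX])
  have ma: "main_axioms X mu f k e1 C (tau 0 DIM('a)) K (\<lambda>n. tau n DIM('a))"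
  proof (rule main_axioms.intro)
    show "k \<ge> 0" "lip_on X k f" "e1 > 0" by (fact k0, fact lip, fact e1)
    show "C \<ge> 0" using C1 by simp
    show "tau 0 DIM('a) > 1" using tau1 by simp
    show "\<And>n. tau 0 DIM('a) \<le> tau n DIM('a)" using taum by simp
    show "\<And>x. x \<in> X \<Longrightarrow> \<bar>f x\<bar> \<le> K" by (rule Kb)
    show "\<And>e. e > 0 \<Longrightarrow> \<exists>r>0. \<forall>x\<in>X. measure mu {y\<in>X. dist y x < r} \<le> e"
      unfolding mu_def by (rule mu_small[OF cpt intX])
    show "\<And>\<delta>. \<delta> > 0 \<Longrightarrow> 0 < measure mu {x\<in>X. Sup (f ` X) - \<delta> < f x}"
      unfolding mu_def by (rule mu_pos[OF cpt intX cvx k0 lip _ fc])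
  qed
  interpret main X mu f k e1 C "tau 0 DIM('a)" K "\<lambda>n. tau n DIM('a)"
    by (rule main.intro[OF pm ma])
  show ?thesis
    unfolding M_def mu_def[symmetric] using regret_meas conv by blast
qed


end
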